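(* For all $n\ge1$ and $k\ge1$, the greedy min-flip list $\mathcal{G}(n,k)$ has flip sequence $\sigma^k_n$; that is, if $\mathcal{G}(n,k)=G_1,\dots,G_N$ and $\sigma^k_n=f_1,\dots,f_{N'}$, then $N'=N-1$ and $G_{t+1}=\mathrm{flip}_{f_t}(G_t)$ for all $1\le t\le N-1$.
   Context: Fix integers $n\ge1$, $k\ge1$. A $k$-coloured permutation of $\{1,\dots,n\}$ is a sequence $\pi=p_1\cdots p_n$ with $p_i=v_i^{c_i}$, where $v_1\cdots v_n$ is a permutation of $\{1,\dots,n\}$ and each $c_i\in\{0,\dots,k-1\}$; the set of these is $\mathbf{C}(n,k)$. For $p=v^c$, $p^{+1}=v^{(c+1)\bmod k}$. For $1\le i\le n$, $\mathrm{flip}_i(p_1\cdots p_n)=p_i^{+1}p_{i-1}^{+1}\cdots p_1^{+1}p_{i+1}\cdots p_n$. The greedy min-flip list $\mathcal{G}(n,k)$ is produced as follows: start with $G_1=1^02^0\cdots n^0$; having produced $G_1,\dots,G_t$, let $i$ be the smallest integer in $\{1,\dots,n\}$ such that $\mathrm{flip}_i(G_t)\notin\{G_1,\dots,G_t\}$, and set $G_{t+1}=\mathrm{flip}_i(G_t)$; if no such $i$ exists, stop, and $\mathcal{G}(n,k)=G_1,\dots,G_t$. The sequence $\sigma^k_n$ is defined by $\sigma^k_1=1^{k-1}$ (the value $1$ repeated $k-1$ times; empty if $k=1$) and, for $n>1$, $\sigma^k_n=(\sigma^k_{n-1},n)^{kn-1},\sigma^k_{n-1}$, i.e. $kn-1$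 copies of the block "$\sigma^k_{n-1}$ followed by $n$", followed by one more copy of $\sigma^k_{n-1}$. *)

theory Defs
  imports Main
begin

(* A coloured symbol v^c is the pair (v, c); a k-coloured permutation is a list of such pairs. *)
type_synonym csym = "nat \<times> nat"

definition incr_col :: "nat \<Rightarrow> csym \<Rightarrow> csym" where
  "incr_col k p = (fst p, (snd p + 1) mod k)"

definition flip :: "nat \<Rightarrow> nat \<Rightarrow> csym list \<Rightarrow> csym list" where
  "flip k i p = map (incr_col k) (rev (take i p)) @ drop i p"

definition start_perm :: "nat \<Rightarrow> csym list" where
  "start_perm n = map (\<lambda>v. (v, 0)) [1..<n+1]"

definition greedy_list :: "nat \<Rightarrow> nat \<Rightarrow> csym list list \<Rightarrow> bool" where
  "greedy_list n k Gs \<longleftrightarrow>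
     Gs \<noteq> [] \<and> hd Gs = start_perm n \<and>
     (\<forall>t < length Gs - 1. \<exists>i \<in> {1..n}.
         Gs ! (t+1) = flip k i (Gs ! t) \<and>
         flip k i (Gs ! t) \<notin> set (take (t+1) Gs) \<and>
         (\<forall>j \<in> {1..n}. j < i \<longrightarrow> flip k j (Gs ! t) \<in> set (take (t+1) Gs))) \<and>
     (\<forall>i \<in> {1..n}. flip k i (last Gs) \<in> set Gs)"

fun sigma :: "nat \<Rightarrow> nat \<Rightarrow> nat list" where
  "sigma k 0 = []"
| "sigma k (Suc 0) = replicate (k - 1) 1"
| "sigma k (Suc (Suc m)) =
     concat (replicate (k * (m+2) - 1) (sigma k (Suc m) @ [m+2])) @ sigma k (Suc m)"

end

theory Submission imports Defs begin

definition app :: "nat \<Rightarrow> nat list \<Rightarrow> csym list \<Rightarrow> csym list" where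
  "app k xs p = fold (flip k) xs p"

definition decr :: "nat \<Rightarrow> csym \<Rightarrow> csym" where
  "decr k x = (fst x, (snd x + k - 1) mod k)"

definition inv_flip :: "nat \<Rightarrow> nat \<Rightarrow> csym list \<Rightarrow> csym list" where
  "inv_flip k m q = map (decr k) (rev (take m q)) @ drop m q"

definition wfc :: "nat \<Rightarrow> csym list \<Rightarrow> bool" where
  "wfc k q \<longleftrightarrow> (\<forall>x\<in>set q. snd x < k)"

definition pinv :: "nat \<Rightarrow> csym list \<Rightarrow> bool" where
  "pinv k q \<longleftrightarrow> distinct (map fst q) \<and> wfc k q"

lemma length_flip[simp]: "length (flip k i q) = length q" by (simp add: flip_def)

lemma app_Nil[simp]: "app k [] q = q" by (simp add: app_def)
lemma app_append: "app k (xs @ ys) q = app k ys (app k xs q)" by (simp add: app_def)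
lemma app_Cons: "app k (x # xs) q = app k xs (flip k x q)" by (simp add: app_def)
lemma app_snoc: "app k (xs @ [x]) q = flip k x (app k xs q)" by (simp add: app_def)

lemma length_app[simp]: "length (app k xs q) = length q"
  by (induction xs arbitrary: q) (simp_all add: app_Cons)

lemma app_take_Suc: "t < length xs \<Longrightarrow> app k (take (Suc t) xs) q = flip k (xs ! t) (app k (take t xs) q)"
  by (simp add: take_Suc_conv_app_nth app_snoc)

lemma drop_flip: "i \<le> m \<Longrightarrow> drop m (flip k i q) = drop m q"
  by (cases "i \<le> length q") (simp_all add: flip_def min_def)

lemma drop_app: "set xs \<subseteq> {..m} \<Longrightarrow> drop m (app k xs q) = drop m q"
  by (induction xs arbitrary: q) (auto simp: app_Cons drop_flip)

lemma inv_flip_pres: assumes "1 \<le> k" "pinv k q" shows "pinv k (flip k i q)"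
proof -
  have d: "distinct (map fst q)" and w: "wfc k q" using assms by (auto simp: pinv_def)
  have "map fst (flip k i q) = rev (take i (map fst q)) @ drop i (map fst q)"
    by (simp add: flip_def incr_col_def rev_map take_map drop_map)
  moreover have "distinct (rev (take i (map fst q)) @ drop i (map fst q))"
    using d by (simp add: set_take_disj_set_drop_if_distinct)
  moreover have "wfc k (flip k i q)" using w assms(1)
    by (auto simp: wfc_def flip_def incr_col_def dest: in_set_dropD)
  ultimately show ?thesis by (simp add: pinv_def)
qed

lemma inv_app: "1 \<le> k \<Longrightarrow> pinv k q \<Longrightarrow> pinv k (app k xs q)"
  by (induction xs arbitrary: q) (simp_all add: app_Cons inv_flip_pres)

lemma incr_pow: "snd x < k \<Longrightarrow> (incr_col k ^^ a) x = (fst x, (snd x + a) mod k)"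
  by (induction a) (simp_all add: incr_col_def mod_Suc_eq)

lemma incr_decr: "snd x < k \<Longrightarrow> incr_col k (decr k x) = x"
  by (cases x) (auto simp: incr_col_def decr_def mod_Suc_eq)

lemma decr_incr: "snd x < k \<Longrightarrow> decr k (incr_col k x) = x"
proof (cases x)
  case (Pair a b)
  assume "snd x < k"
  then have "b < k" using Pair by simp
  show ?thesis
  proof (cases "b + 1 < k")
    case True
    then have "((b+1) mod k + k - 1) mod k = (b + k) mod k" by simp
    then show ?thesis using Pair \<open>b<k\<close> by (simp add: incr_col_def decr_def)
  next
    case False
    then have "b + 1 = k" using \<open>b<k\<close> by simp
    then show ?thesis using Pair by (simp add: incr_col_def decr_def)
  qed
qed

lemma flip_inv_flip: assumes "wfc k q" "m \<le> length q" shows "flip k m (inv_flip k m q) = q"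
proof -
  have "map (incr_col k \<circ> decr k) (take m q) = take m q"
  proof (rule map_idI)
    fix x assume "x \<in> set (take m q)"
    then have "snd x < k" using assms(1) by (auto simp: wfc_def dest: in_set_takeD)
    then show "(incr_col k \<circ> decr k) x = x" by (simp add: incr_decr)
  qed
  then show ?thesis using assms by (simp add: flip_def inv_flip_def rev_map)
qed

lemma inv_flip_flip: assumes "wfc k r" "m \<le> length r" shows "inv_flip k m (flip k m r) = r"
proof -
  have "map (decr k \<circ> incr_col k) (take m r) = take m r"
  proof (rule map_idI)
    fix x assume "x \<in> set (take m r)"
    then have "snd x < k" using assms(1) by (auto simp: wfc_def dest: in_set_takeD)
    then show "(decr k \<circ> incr_col k) x = x" by (simp add: decr_incr)
  qed
  then show ?thesis using assms by (simp add: flip_def inv_flip_def rev_map)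
qed

lemma sigma_set: "set (sigma k m) \<subseteq> {1..m}"
proof (induction k m rule: sigma.induct)
  case (3 k m)
  have "set (concat (replicate (k * (m+2) - 1) (sigma k (Suc m) @ [m+2]))) \<subseteq> set (sigma k (Suc m) @ [m+2])"
    by (induction "k * (m+2) - 1") auto
  with 3 show ?case by auto
qed auto

lemma mod_inj: assumes "(c + (a::nat)) mod k = (c + b) mod k" "a < k" "b < k" shows "a = b"
proof -
  have *: "x = y" if "(c + x) mod k = (c + y) mod k" "x < k" "y \<le> x" for x y :: nat
  proof -
    have "k dvd (c + x) - (c + y)" using mod_eq_dvd_iff_nat[of "c+y" "c+x" k] that by simp
    then have "k dvd x - y" by simp
    then show ?thesis using that by (cases "x - y = 0") (auto dest: dvd_imp_le)
  qed
  show ?thesis using *[of a b] *[of b a] assms by (cases "b \<le> a") auto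
qed

definition G1 :: "nat \<Rightarrow> nat \<Rightarrow> csym list \<Rightarrow> bool" where
  "G1 k m q \<longleftrightarrow> app k (sigma k m) q = inv_flip k m q"
definition G2 :: "nat \<Rightarrow> nat \<Rightarrow> csym list \<Rightarrow> bool" where
  "G2 k m q \<longleftrightarrow> (\<forall>t1\<le>length (sigma k m). \<forall>t2\<le>length (sigma k m).
        app k (take t1 (sigma k m)) q = app k (take t2 (sigma k m)) q \<longrightarrow> t1 = t2)"
definition G3 :: "nat \<Rightarrow> nat \<Rightarrow> csym list \<Rightarrow> bool" where
  "G3 k m q \<longleftrightarrow> (\<forall>t<length (sigma k m). \<forall>j. 1 \<le> j \<and> j < sigma k m ! t \<longrightarrow>
        (\<exists>t'\<le>t. flip k j (app k (take t (sigma k m)) q) = app k (take t' (sigma k m)) q))"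
definition G4 :: "nat \<Rightarrow> nat \<Rightarrow> csym list \<Rightarrow> bool" where
  "G4 k m q \<longleftrightarrow> (\<forall>j. 1 \<le> j \<and> j \<le> m \<longrightarrow>
        (\<exists>t'\<le>length (sigma k m). flip k j (app k (sigma k m) q) = app k (take t' (sigma k m)) q))"

definition good :: "nat \<Rightarrow> nat \<Rightarrow> bool" where
  "good k m \<longleftrightarrow> (\<forall>q. pinv k q \<and> m \<le> length q \<longrightarrow> G1 k m q \<and> G2 k m q \<and> G3 k m q \<and> G4 k m q)"

lemma flip1: "flip k (Suc 0) (x # xs) = incr_col k x # xs"
  by (simp add: flip_def)

lemma app_rep1: "app k (replicate t (Suc 0)) (x # xs) = (incr_col k ^^ t) x # xs"
  by (induction t arbitrary: x) (simp_all add: app_Cons flip1 funpow_Suc_right del: funpow.simps)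

lemma good1: assumes "1 \<le> k" shows "good k 1"
  unfolding good_def
proof (intro allI impI)
  fix q assume A: "pinv k q \<and> 1 \<le> length q"
  then obtain x xs where q: "q = x # xs" by (cases q) auto
  have xk: "snd x < k" using A q by (simp add: pinv_def wfc_def)
  have sg: "sigma k 1 = replicate (k-1) (Suc 0)" by simp
  have st: "app k (take t (sigma k 1)) q = (fst x, (snd x + min t (k-1)) mod k) # xs" for t
    using xk by (simp add: sg q app_rep1 incr_pow)
  have "G1 k 1 q"
    using st[of "k-1"] assms by (simp add: G1_def sg q inv_flip_def decr_def)
  moreover have "G2 k 1 q" unfolding G2_def
  proof (intro allI impI)
    fix t1 t2 assume t1: "t1 \<le> length (sigma k 1)" and t2: "t2 \<le> length (sigma k 1)"
      and e: "app k (take t1 (sigma k 1)) q = app k (take t2 (sigma k 1)) q"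
    have "t1 < k" "t2 < k" using t1 t2 assms by (auto simp: sg)
    have m1: "min t1 (k-1) = t1" "min t2 (k-1) = t2" using \<open>t1 < k\<close> \<open>t2 < k\<close> by auto
    have "(snd x + min t1 (k-1)) mod k = (snd x + min t2 (k-1)) mod k"
      using e unfolding st by simp
    then have "(snd x + t1) mod k = (snd x + t2) mod k" using \<open>t1 < k\<close> \<open>t2 < k\<close>
      by (simp only: m1)
    then show "t1 = t2" using \<open>t1 < k\<close> \<open>t2 < k\<close> by (rule mod_inj)
  qed
  moreover have "G3 k 1 q"
    by (simp add: G3_def sg)
  moreover have "G4 k 1 q" unfolding G4_def
  proof (intro allI impI)
    fix j :: nat assume "1 \<le> j \<and> j \<le> 1"
    then have j: "j = Suc 0" by simp
    have "flip k j (app k (sigma k 1) q) = q"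
      using st[of "k-1"] assms xk by (simp add: j sg q flip1 incr_col_def mod_Suc_eq)
    then show "\<exists>t'\<le>length (sigma k 1). flip k j (app k (sigma k 1) q) = app k (take t' (sigma k 1)) q"
      by (intro exI[of _ 0]) simp
  qed
  ultimately show "G1 k 1 q \<and> G2 k 1 q \<and> G3 k 1 q \<and> G4 k 1 q" by blast
qed


definition rot :: "nat \<Rightarrow> csym list \<Rightarrow> csym list" where
  "rot k P = incr_col k (last P) # butlast P"

lemma rot_pow: "r \<le> length P \<Longrightarrow>
  (rot k ^^ r) P = map (incr_col k) (drop (length P - r) P) @ take (length P - r) P"
proof (induction r)
  case 0 then show ?case by simp
next
  case (Suc r)
  let ?i = "length P - Suc r"
  have i: "?i < length P" "length P - r = Suc ?i" using Suc.prems by auto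
  have "(rot k ^^ Suc r) P = rot k (map (incr_col k) (drop (length P - r) P) @ take (length P - r) P)"
    using Suc by simp
  also have "\<dots> = map (incr_col k) (drop ?i P) @ take ?i P"
    using i Cons_nth_drop_Suc[OF i(1), symmetric] by (simp add: rot_def take_Suc_conv_app_nth butlast_append)
  finally show ?case .
qed

lemma rot_n: "length P = n \<Longrightarrow> (rot k ^^ n) P = map (incr_col k) P"
  using rot_pow[of n P k] by simp

lemma rot_an: "length P = n \<Longrightarrow> (rot k ^^ (a*n)) P = map (incr_col k ^^ a) P"
proof (induction a)
  case 0 then show ?case by simp
next
  case (Suc a)
  have "(rot k ^^ (Suc a * n)) P = (rot k ^^ n) ((rot k ^^ (a*n)) P)"
    by (simp add: funpow_add)
  also have "\<dots> = map (incr_col k) (map (incr_col k ^^ a) P)"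
    using Suc by (simp add: rot_n)
  finally show ?case by simp
qed

lemma rot_elem: assumes "length P = n" "r < n"
  shows "((rot k ^^ (a*n + r)) P) ! (n-1) = (incr_col k ^^ a) (P ! (n-1-r))"
proof -
  have "(rot k ^^ (a*n + r)) P = (rot k ^^ r) ((rot k ^^ (a*n)) P)"
    by (simp add: funpow_add add.commute[of "a*n" r])
  also have "\<dots> = (rot k ^^ r) (map (incr_col k ^^ a) P)" using assms by (simp add: rot_an)
  also have "\<dots> = map (incr_col k) (drop (n - r) (map (incr_col k ^^ a) P)) @ take (n - r) (map (incr_col k ^^ a) P)"
    using assms by (simp add: rot_pow)
  finally have e: "(rot k ^^ (a*n + r)) P = \<dots>" .
  have "\<not> n - 1 < r" using assms by arith
  then show ?thesis unfolding e using assms by (simp add: nth_append)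
qed

lemma length_rot_pow: "P \<noteq> [] \<Longrightarrow> length ((rot k ^^ r) P) = length P"
proof (induction r)
  case (Suc r)
  then have "(rot k ^^ r) P \<noteq> []" by (metis length_0_conv)
  then show ?case using Suc by (simp add: rot_def)
qed simp


lemma take_rep: "r < length S \<Longrightarrow> jj < N \<Longrightarrow>
  take (jj * length S + r) (concat (replicate N S) @ R) = concat (replicate jj S) @ take r S"
proof (induction jj arbitrary: N)
  case 0
  then obtain N' where "N = Suc N'" by (cases N) auto
  then show ?case using 0 by simp
next
  case (Suc jj)
  then obtain N' where N: "N = Suc N'" by (cases N) auto
  have "take (Suc jj * length S + r) (concat (replicate N S) @ R)
      = S @ take (jj * length S + r) (concat (replicate N' S) @ R)" by (simp add: N)
  then show ?case using Suc N by simp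
qed

lemma take_rep2: "take (N * length S + r) (concat (replicate N S) @ R) = concat (replicate N S) @ take r R"
  by (simp add: length_concat sum_list_replicate)

lemma nth_rep: "r < length S \<Longrightarrow> jj < N \<Longrightarrow>
  (concat (replicate N S) @ R) ! (jj * length S + r) = S ! r"
proof (induction jj arbitrary: N)
  case 0
  then obtain N' where "N = Suc N'" by (cases N) auto
  then show ?case using 0 by (simp add: nth_append)
next
  case (Suc jj)
  then obtain N' where N: "N = Suc N'" by (cases N) auto
  have "(concat (replicate N S) @ R) ! (Suc jj * length S + r)
      = (concat (replicate N' S) @ R) ! (jj * length S + r)" by (simp add: N nth_append)
  then show ?case using Suc N by simp
qed

lemma nth_rep2: "(concat (replicate N S) @ R) ! (N * length S + r) = R ! r"
  by (simp add: nth_append length_concat sum_list_replicate)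

lemma app_rep: "app k (concat (replicate j S)) q = ((\<lambda>q. app k S q) ^^ j) q"
  by (induction j arbitrary: q) (simp_all add: app_append funpow_Suc_right del: funpow.simps)

definition Bm :: "nat \<Rightarrow> nat \<Rightarrow> csym list \<Rightarrow> csym list" where
  "Bm k n q = app k (sigma k (n-1) @ [n]) q"

lemma flip_split: assumes "length A + 1 = n" shows "flip k n (A @ y # D) = incr_col k y # map (incr_col k) (rev A) @ D"
proof -
  have "n - length A = Suc 0" using assms by simp
  then show ?thesis using assms by (simp add: flip_def)
qed

context
  fixes k n :: nat
  assumes k1: "1 \<le> k" and n2: "2 \<le> n" and IH: "good k (n-1)"
begin

lemma sig_eq: "sigma k n = concat (replicate (k*n-1) (sigma k (n-1) @ [n])) @ sigma k (n-1)"
proof -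
  obtain m where "n = Suc (Suc m)" using n2 by (metis add_2_eq_Suc le_Suc_ex)
  then show ?thesis by (simp add: add.commute)
qed

lemma IHq: "pinv k q \<Longrightarrow> n - 1 \<le> length q \<Longrightarrow> G1 k (n-1) q \<and> G2 k (n-1) q \<and> G3 k (n-1) q \<and> G4 k (n-1) q"
  using IH by (simp add: good_def)

lemma pinv_Bpow: "pinv k q \<Longrightarrow> pinv k ((Bm k n ^^ j) q)"
  by (induction j) (auto simp: Bm_def intro: inv_app[OF k1])

lemma len_Bpow[simp]: "length ((Bm k n ^^ j) q) = length q"
  by (induction j) (simp_all add: Bm_def)

lemma B_formula: assumes "pinv k q" "n \<le> length q" shows "Bm k n q = rot k (take n q) @ drop n q"
proof -
  have w: "wfc k q" using assms by (simp add: pinv_def)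
  have lt: "n - 1 < length q" using assms n2 by simp
  have "app k (sigma k (n-1)) q = inv_flip k (n-1) q" using IHq[OF assms(1)] assms by (simp add: G1_def)
  then have "Bm k n q = flip k n (inv_flip k (n-1) q)" by (simp add: Bm_def app_snoc)
  also have "inv_flip k (n-1) q = map (decr k) (rev (take (n-1) q)) @ q ! (n-1) # drop n q"
    using Cons_nth_drop_Suc[OF lt] n2 by (simp add: inv_flip_def)
  also have "flip k n \<dots> = incr_col k (q ! (n-1)) # map (incr_col k) (map (decr k) (take (n-1) q)) @ drop n q"
    using lt n2 by (simp add: flip_split rev_map)
  also have "map (incr_col k) (map (decr k) (take (n-1) q)) = take (n-1) q"
  proof -
    have "map (incr_col k \<circ> decr k) (take (n-1) q) = take (n-1) q"
    proof (rule map_idI)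
      fix x assume "x \<in> set (take (n-1) q)"
      then have "snd x < k" using w by (auto simp: wfc_def dest: in_set_takeD)
      then show "(incr_col k \<circ> decr k) x = x" by (simp add: incr_decr)
    qed
    then show ?thesis by simp
  qed
  also have "take n q = take (n-1) q @ [q ! (n-1)]"
    using take_Suc_conv_app_nth[OF lt] n2 by simp
  ultimately show ?thesis by (simp add: rot_def)
qed

lemma Bpow: assumes "pinv k q" "n \<le> length q"
  shows "(Bm k n ^^ j) q = (rot k ^^ j) (take n q) @ drop n q"
proof (induction j)
  case 0 then show ?case by simp
next
  case (Suc j)
  have ne: "take n q \<noteq> []" using assms n2 by auto
  have ln: "length ((rot k ^^ j) (take n q)) = n" using length_rot_pow[OF ne] assms by simp
  have "(Bm k n ^^ Suc j) q = Bm k n ((Bm k n ^^ j) q)" by simp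
  also have "\<dots> = rot k (take n ((Bm k n ^^ j) q)) @ drop n ((Bm k n ^^ j) q)"
    using B_formula[OF pinv_Bpow[OF assms(1)]] assms by simp
  also have "\<dots> = rot k ((rot k ^^ j) (take n q)) @ drop n q"
    using Suc ln by simp
  finally show ?case by simp
qed

lemma wfc_take_incr: "wfc k P \<Longrightarrow> map (incr_col k ^^ k) P = P"
  by (rule map_idI) (auto simp: wfc_def incr_pow)

lemma Bpow_kn: assumes "pinv k q" "n \<le> length q" shows "(Bm k n ^^ (k*n)) q = q"
proof -
  have w: "wfc k (take n q)" using assms by (auto simp: pinv_def wfc_def dest: in_set_takeD)
  have "(Bm k n ^^ (k*n)) q = (rot k ^^ (k*n)) (take n q) @ drop n q" using Bpow[OF assms] .
  also have "(rot k ^^ (k*n)) (take n q) = map (incr_col k ^^ k) (take n q)"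
    using rot_an[of "take n q" n k k] assms by simp
  also have "\<dots> = take n q" using wfc_take_incr[OF w] .
  finally show ?thesis by simp
qed

lemma Bpow_elem: assumes "pinv k q" "n \<le> length q"
  shows "((Bm k n ^^ j) q) ! (n-1) = (fst (q ! (n-1-j mod n)), (snd (q ! (n-1-j mod n)) + j div n) mod k)"
proof -
  have "q \<noteq> []" using assms n2 by auto
  then have ln: "length ((rot k ^^ j) (take n q)) = n" using length_rot_pow[of "take n q"] assms n2 by simp
  have "((Bm k n ^^ j) q) ! (n-1) = ((rot k ^^ j) (take n q)) ! (n-1)"
    using Bpow[OF assms] ln n2 by (simp add: nth_append)
  also have "((rot k ^^ j) (take n q)) ! (n-1) = (incr_col k ^^ (j div n)) (take n q ! (n-1-j mod n))"
    using rot_elem[of "take n q" n "j mod n" "j div n" k] assms n2 by simp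
  also have "take n q ! (n-1-j mod n) = q ! (n-1-j mod n)" using n2 by simp
  also have "snd (q ! (n-1-j mod n)) < k"
    using assms n2 by (auto simp: pinv_def wfc_def)
  then have "(incr_col k ^^ (j div n)) (q ! (n-1-j mod n)) = (fst (q ! (n-1-j mod n)), (snd (q ! (n-1-j mod n)) + j div n) mod k)"
    by (rule incr_pow)
  finally show ?thesis .
qed


lemma Bpow_inj: assumes "pinv k q" "n \<le> length q" "j1 < k*n" "j2 < k*n"
  and e: "((Bm k n ^^ j1) q) ! (n-1) = ((Bm k n ^^ j2) q) ! (n-1)"
  shows "j1 = j2"
proof -
  have n0: "0 < n" using n2 by simp
  let ?i1 = "n-1-j1 mod n" and ?i2 = "n-1-j2 mod n"
  have r1: "j1 mod n < n" "j2 mod n < n" using n0 by simp_all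
  have i: "?i1 < length q" "?i2 < length q" using assms(2) n2 by auto
  have e2: "fst (q ! ?i1) = fst (q ! ?i2)" "(snd (q ! ?i1) + j1 div n) mod k = (snd (q ! ?i2) + j2 div n) mod k"
    using e Bpow_elem[OF assms(1,2), of j1] Bpow_elem[OF assms(1,2), of j2] by simp_all
  have d: "distinct (map fst q)" using assms(1) by (simp add: pinv_def)
  have "(map fst q) ! ?i1 = (map fst q) ! ?i2" using e2(1) i by simp
  then have "?i1 = ?i2" using nth_eq_iff_index_eq[OF d] i by simp
  then have rr: "j1 mod n = j2 mod n" using r1 by arith
  have a: "j1 div n < k" "j2 div n < k" using assms(3,4) n0 by (simp_all add: div_less_iff_less_mult mult.commute)
  have "(snd (q ! ?i1) + j1 div n) mod k = (snd (q ! ?i1) + j2 div n) mod k"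
    using e2(2) \<open>?i1 = ?i2\<close> by simp
  then have "j1 div n = j2 div n" using a by (rule mod_inj)
  then show ?thesis using rr by (metis div_mult_mod_eq)
qed

lemma nth_from_drop: "drop i a = drop i b \<Longrightarrow> i < length a \<Longrightarrow> i < length b \<Longrightarrow> a ! i = b ! i"
  by (metis hd_drop_conv_nth)

lemma good_step: "good k n"
  unfolding good_def
proof (intro allI impI)
  fix q assume A: "pinv k q \<and> n \<le> length q"
  then have pq: "pinv k q" and lq: "n \<le> length q" by auto
  define s where "s = sigma k (n-1)"
  define L where "L = length s + 1"
  define N where "N = k*n - 1"
  define Y where "Y = (\<lambda>j. (Bm k n ^^ j) q)"
  have kn: "2 \<le> k*n" using k1 n2 by (metis le_trans mult_le_mono1 mult_1)
  have sig: "sigma k n = concat (replicate N (s@[n])) @ s" using sig_eq by (simp add: s_def N_def)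
  have lenS: "length (s @ [n]) = L" by (simp add: L_def)
  have lsig: "length (sigma k n) = N*L + length s"
    by (simp add: sig length_concat sum_list_replicate L_def)
  have sset: "set s \<subseteq> {..n-1}" using sigma_set[of k "n-1"] by (auto simp: s_def)
  have Yinv: "pinv k (Y j)" for j using pinv_Bpow[OF pq] by (simp add: Y_def)
  have Ylen: "length (Y j) = length q" for j by (simp add: Y_def)
  have IHY: "G1 k (n-1) (Y j) \<and> G2 k (n-1) (Y j) \<and> G3 k (n-1) (Y j) \<and> G4 k (n-1) (Y j)" for j
    using IHq[OF Yinv] Ylen lq by simp
  have appY: "app k (concat (replicate j (s@[n]))) q = Y j" for j
  proof -
    have "(\<lambda>q. app k (s @ [n]) q) = Bm k n" by (simp add: fun_eq_iff Bm_def s_def)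
    then show ?thesis by (simp add: app_rep Y_def)
  qed
  have dec: "app k (take (jj*L + r) (sigma k n)) q = app k (take r s) (Y jj)"
    if "jj \<le> N" "r \<le> length s" for jj r
  proof (cases "jj < N")
    case True
    have rl: "r < length (s@[n])" using that by simp
    have tr: "take r (s@[n]) = take r s" using that by simp
    from take_rep[OF rl True, of s] have "take (jj*L + r) (sigma k n) = concat (replicate jj (s@[n])) @ take r s"
      using tr by (simp only: sig lenS)
    then show ?thesis by (simp add: app_append appY)
  next
    case False
    then have "jj = N" using that by simp
    then have "take (jj*L + r) (sigma k n) = concat (replicate N (s@[n])) @ take r s"
      using take_rep2[of N "s@[n]" r s] by (simp only: sig lenS)
    then show ?thesis using \<open>jj = N\<close> by (simp add: app_append appY)
  qed
  have split: "t div L \<le> N \<and> t mod L \<le> length s"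
    if "t \<le> length (sigma k n)" for t
  proof -
    have L0: "0 < L" by (simp add: L_def)
    have "t div L \<le> (N*L + length s) div L" using that lsig div_le_mono by simp
    also have "(N*L + length s) div L = N + length s div L" using L0 by (simp only: div_mult_self3)
    also have "length s div L = 0" by (simp add: L_def)
    finally have "t div L \<le> N" by simp
    moreover have "t mod L \<le> length s" using L0 by (simp add: L_def less_Suc_eq_le)
    ultimately show ?thesis by simp
  qed
  have stY: "app k (sigma k n) q = app k s (Y N)"
    using dec[of N "length s"] by (simp add: lsig)
  have flipY: "flip k n (app k s (Y j)) = Y (Suc j)" for j
    by (simp add: Y_def Bm_def s_def app_snoc)
  have fq: "flip k n (app k (sigma k n) q) = q"
  proof -
    have "Suc N = k*n" using kn by (simp add: N_def)
    have "flip k n (app k (sigma k n) q) = Y (Suc N)" by (simp only: stY flipY)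
    also have "Y (Suc N) = q" using Bpow_kn[OF pq lq] \<open>Suc N = k*n\<close> by (simp add: Y_def)
    finally show ?thesis .
  qed
  have wsig: "wfc k (app k (sigma k n) q)" using inv_app[OF k1 pq] by (simp add: pinv_def)
  have g1: "G1 k n q"
    using inv_flip_flip[OF wsig, of n] lq fq by (simp add: G1_def)
  have elem: "(app k (take r s) (Y j)) ! (n-1) = (Y j) ! (n-1)" for r j
  proof -
    have "set (take r s) \<subseteq> {..n-1}" using subset_trans[OF set_take_subset sset] .
    then have "drop (n-1) (app k (take r s) (Y j)) = drop (n-1) (Y j)" by (rule drop_app)
    then show ?thesis by (rule nth_from_drop) (use lq n2 Ylen in auto)
  qed
  have g2: "G2 k n q" unfolding G2_def
  proof (intro allI impI)
    fix t1 t2 assume t1: "t1 \<le> length (sigma k n)" and t2: "t2 \<le> length (sigma k n)"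
      and e: "app k (take t1 (sigma k n)) q = app k (take t2 (sigma k n)) q"
    note sp1 = split[OF t1] and sp2 = split[OF t2]
    have e1: "app k (take (t1 mod L) s) (Y (t1 div L)) = app k (take (t2 mod L) s) (Y (t2 div L))"
      using e dec[of "t1 div L" "t1 mod L"] dec[of "t2 div L" "t2 mod L"] sp1 sp2 by simp
    have "(Y (t1 div L)) ! (n-1) = (Y (t2 div L)) ! (n-1)"
      using arg_cong[OF e1, of "\<lambda>x. x ! (n-1)"] elem by simp
    moreover have "t1 div L < k*n" "t2 div L < k*n" using sp1 sp2 kn unfolding N_def by arith+
    ultimately have jj: "t1 div L = t2 div L" using Bpow_inj[OF pq lq] by (simp add: Y_def)
    then have "app k (take (t1 mod L) s) (Y (t1 div L)) = app k (take (t2 mod L) s) (Y (t1 div L))"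
      using e1 by simp
    have h: "G2 k (n-1) (Y (t1 div L))" using IHY by blast
    then have "\<forall>a\<le>length s. \<forall>b\<le>length s. app k (take a s) (Y (t1 div L)) = app k (take b s) (Y (t1 div L)) \<longrightarrow> a = b"
      by (simp add: G2_def s_def)
    then have "t1 mod L = t2 mod L" using sp1 sp2 \<open>app k (take (t1 mod L) s) (Y (t1 div L)) = app k (take (t2 mod L) s) (Y (t1 div L))\<close> by blast
    then show "t1 = t2" using jj by (metis div_mult_mod_eq)
  qed
  have g3: "G3 k n q" unfolding G3_def
  proof (intro allI impI)
    fix t j assume t: "t < length (sigma k n)" and j: "1 \<le> j \<and> j < sigma k n ! t"
    note sp = split[of t]
    define jj where "jj = t div L"
    define r where "r = t mod L"
    have jjN: "jj \<le> N" and rs: "r \<le> length s" using sp t by (simp_all add: jj_def r_def)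
    have tt: "t = jj*L + r" by (simp add: jj_def r_def)
    show "\<exists>t'\<le>t. flip k j (app k (take t (sigma k n)) q) = app k (take t' (sigma k n)) q"
    proof (cases "r < length s")
      case True
      have "sigma k n ! t = s ! r"
      proof (cases "jj < N")
        case True
        have rl: "r < length (s@[n])" using \<open>r < length s\<close> by simp
        have "sigma k n ! t = (s@[n]) ! r" using nth_rep[OF rl True, of s] by (simp only: tt sig lenS)
        then show ?thesis using \<open>r < length s\<close> by (simp add: nth_append)
      next
        case False
        then have "jj = N" using jjN by simp
        then show ?thesis using nth_rep2[of N "s@[n]" s r] by (simp only: tt sig lenS)
      qed
      then have "1 \<le> j \<and> j < s ! r" using j by simp
      have h: "G3 k (n-1) (Y jj)" using IHY by blast
      then have "\<forall>t<length s. \<forall>j. 1 \<le> j \<and> j < s ! t \<longrightarrow>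
        (\<exists>t'\<le>t. flip k j (app k (take t s) (Y jj)) = app k (take t' s) (Y jj))" by (simp add: G3_def s_def)
      then obtain r' where r': "r' \<le> r" "flip k j (app k (take r s) (Y jj)) = app k (take r' s) (Y jj)"
        using True \<open>1 \<le> j \<and> j < s ! r\<close> by blast
      show ?thesis
        by (rule exI[of _ "jj*L + r'"]) (use r' dec[of jj r] dec[of jj r'] jjN rs tt in simp)
    next
      case False
      then have rs': "r = length s" using rs by simp
      have "jj < N"
      proof (rule ccontr)
        assume "\<not> jj < N" then have "jj = N" using jjN by simp
        then show False using t tt rs' lsig by simp
      qed
      have rl: "r < length (s@[n])" using rs' by simp
      have "sigma k n ! t = (s@[n]) ! r" using nth_rep[OF rl \<open>jj < N\<close>, of s] by (simp only: tt sig lenS)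
      then have "sigma k n ! t = n" using rs' by simp
      then have "1 \<le> j \<and> j \<le> n - 1" using j by auto
      have h: "G4 k (n-1) (Y jj)" using IHY by blast
      then have "\<forall>j. 1 \<le> j \<and> j \<le> n-1 \<longrightarrow>
        (\<exists>t'\<le>length s. flip k j (app k s (Y jj)) = app k (take t' s) (Y jj))" by (simp add: G4_def s_def)
      then obtain r' where r': "r' \<le> length s" "flip k j (app k s (Y jj)) = app k (take r' s) (Y jj)"
        using \<open>1 \<le> j \<and> j \<le> n - 1\<close> by blast
      show ?thesis
        by (rule exI[of _ "jj*L + r'"]) (use r' dec[of jj r] dec[of jj r'] jjN rs' tt in simp)
    qed
  qed
  have g4: "G4 k n q" unfolding G4_def
  proof (intro allI impI)
    fix j assume j: "1 \<le> j \<and> j \<le> n"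
    show "\<exists>t'\<le>length (sigma k n). flip k j (app k (sigma k n) q) = app k (take t' (sigma k n)) q"
    proof (cases "j = n")
      case True
      then show ?thesis using fq by (intro exI[of _ 0]) simp
    next
      case False
      then have "1 \<le> j \<and> j \<le> n - 1" using j by arith
      have h: "G4 k (n-1) (Y N)" using IHY by blast
      then have "\<forall>j. 1 \<le> j \<and> j \<le> n-1 \<longrightarrow>
        (\<exists>t'\<le>length s. flip k j (app k s (Y N)) = app k (take t' s) (Y N))" by (simp add: G4_def s_def)
      then obtain r' where r': "r' \<le> length s" "flip k j (app k s (Y N)) = app k (take r' s) (Y N)"
        using \<open>1 \<le> j \<and> j \<le> n - 1\<close> by blast
      show ?thesis
        by (rule exI[of _ "N*L + r'"]) (use r' dec[of N r'] stY lsig in simp)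
    qed
  qed
  show "G1 k n q \<and> G2 k n q \<and> G3 k n q \<and> G4 k n q" using g1 g2 g3 g4 by blast
qed

end


lemma good_all: assumes k: "1 \<le> k" and n: "1 \<le> n" shows "good k n"
  using n
proof (induction n rule: dec_induct)
  case base
  then show ?case using good1[OF k] .
next
  case (step m)
  have "2 \<le> Suc m" using step by simp
  moreover have "good k (Suc m - 1)" using step by simp
  ultimately show ?case using good_step[OF k] by blast
qed

lemma in_take_conv: "t < length xs \<Longrightarrow> (x \<in> set (take (Suc t) xs)) = (\<exists>t'\<le>t. xs ! t' = x)"
  by (auto simp: in_set_conv_nth less_Suc_eq_le)

theorem lemma4:
  fixes n k :: nat
  assumes "n \<ge> 1" and "k \<ge> 1"
  shows "\<exists>Gs. greedy_list n k Gs \<and>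
           length (sigma k n) = length Gs - 1 \<and>
           (\<forall>t < length Gs - 1. Gs ! (t+1) = flip k (sigma k n ! t) (Gs ! t))"
proof -
  define p where "p = start_perm n"
  define \<sigma> where "\<sigma> = sigma k n"
  define Gs where "Gs = map (\<lambda>t. app k (take t \<sigma>) p) [0..<Suc (length \<sigma>)]"
  have pp: "pinv k p" using assms(2)
    by (auto simp: p_def start_perm_def pinv_def wfc_def distinct_map inj_on_def)
  have lp: "n \<le> length p" by (simp add: p_def start_perm_def)
  have gd: "G1 k n p \<and> G2 k n p \<and> G3 k n p \<and> G4 k n p"
    using good_all[OF assms(2) assms(1)] pp lp by (simp add: good_def)
  have lG: "length Gs = Suc (length \<sigma>)" by (simp add: Gs_def)
  have nG: "Gs ! t = app k (take t \<sigma>) p" if "t \<le> length \<sigma>" for t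
    using that by (simp add: Gs_def nth_append del: upt_Suc)
  have setG: "(x \<in> set Gs) = (\<exists>t\<le>length \<sigma>. app k (take t \<sigma>) p = x)" for x
    unfolding Gs_def set_map set_upt image_iff atLeastLessThan_iff Bex_def
    by (auto simp: less_Suc_eq_le)
  have takeG: "(x \<in> set (take (Suc t) Gs)) = (\<exists>t'\<le>t. app k (take t' \<sigma>) p = x)" if "t < length \<sigma>" for t x
    using that in_take_conv[of t Gs x] lG nG by auto
  have sset: "set \<sigma> \<subseteq> {1..n}" using sigma_set by (simp add: \<sigma>_def)
  have step: "Gs ! (t+1) = flip k (\<sigma> ! t) (Gs ! t)" if "t < length \<sigma>" for t
    using that nG app_take_Suc[OF that] by simp
  have "greedy_list n k Gs"
    unfolding greedy_list_def
  proof (intro conjI ballI allI impI)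
    show "Gs \<noteq> []" using lG by auto
    have "Gs \<noteq> []" using lG by auto
    then have "hd Gs = Gs ! 0" by (rule hd_conv_nth)
    then show "hd Gs = start_perm n" using nG[of 0] by (simp add: p_def)
  next
    fix t assume t: "t < length Gs - 1"
    then have t': "t < length \<sigma>" using lG by simp
    show "\<exists>i\<in>{1..n}. Gs ! (t + 1) = flip k i (Gs ! t) \<and> flip k i (Gs ! t) \<notin> set (take (t + 1) Gs) \<and>
        (\<forall>j\<in>{1..n}. j < i \<longrightarrow> flip k j (Gs ! t) \<in> set (take (t + 1) Gs))"
    proof (intro bexI[of _ "\<sigma> ! t"] conjI ballI impI)
      show "\<sigma> ! t \<in> {1..n}" using sset t' nth_mem by blast
      show "Gs ! (t + 1) = flip k (\<sigma> ! t) (Gs ! t)" using step[OF t'] .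
      show "flip k (\<sigma> ! t) (Gs ! t) \<notin> set (take (t + 1) Gs)"
      proof
        assume "flip k (\<sigma> ! t) (Gs ! t) \<in> set (take (t + 1) Gs)"
        then obtain t2 where t2: "t2 \<le> t" "app k (take t2 \<sigma>) p = flip k (\<sigma> ! t) (Gs ! t)"
          using takeG[OF t'] by auto
        have "app k (take t2 \<sigma>) p = app k (take (Suc t) \<sigma>) p"
          using t2 step[OF t'] nG[of "Suc t"] t' by simp
        then have "t2 = Suc t" using gd t2(1) t' unfolding G2_def \<sigma>_def[symmetric]
          by (meson Suc_leI le_trans less_imp_le)
        then show False using t2(1) by simp
      qed
    next
      fix j assume j: "j \<in> {1..n}" "j < \<sigma> ! t"
      have "G3 k n p" using gd by blast
      then obtain t2 where "t2 \<le> t" "flip k j (app k (take t \<sigma>) p) = app k (take t2 \<sigma>) p"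
        using t' j unfolding G3_def \<sigma>_def[symmetric] by auto
      then show "flip k j (Gs ! t) \<in> set (take (t + 1) Gs)"
        using takeG[OF t'] nG[of t] t' by auto
    qed
  next
    fix i assume i: "i \<in> {1..n}"
    have "G4 k n p" using gd by blast
    then obtain t2 where "t2 \<le> length \<sigma>" "flip k i (app k \<sigma> p) = app k (take t2 \<sigma>) p"
      using i unfolding G4_def \<sigma>_def[symmetric] by auto
    moreover have "last Gs = app k \<sigma> p"
    proof -
      have "Gs \<noteq> []" using lG by auto
      then have "last Gs = Gs ! (length Gs - 1)" by (rule last_conv_nth)
      then show ?thesis using nG[of "length \<sigma>"] lG by simp
    qed
    ultimately show "flip k i (last Gs) \<in> set Gs" using setG by auto
  qed
  moreover have "length (sigma k n) = length Gs - 1" using lG by (simp add: \<sigma>_def)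
  moreover have "\<forall>t < length Gs - 1. Gs ! (t+1) = flip k (sigma k n ! t) (Gs ! t)"
    using step lG by (simp add: \<sigma>_def)
  ultimately show ?thesis by blast
qed

end
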